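(* Let $0<\alpha<1$, $0<\beta<\infty$, $u\in H(\mathbb{D})$ and $\varphi\in S(\mathbb{D})$. Then the weighted composition operator $uC_\varphi$ maps $\mathcal{B}^\alpha$ boundedly into $\mathcal{Z}_\beta$ if and only if $u\in\mathcal{Z}_\beta$ and $$\sup_{z\in\mathbb{D}}\frac{(1-|z|^2)^\beta|2u'(z)\varphi'(z)+u(z)\varphi''(z)|}{(1-|\varphi(z)|^2)^\alpha}\asymp\sup_{n\ge0}(n+1)^\alpha\|(2u'\varphi'+u\varphi'')\varphi^n\|_{\nu_\beta}<\infty,$$ $$\sup_{z\in\mathbb{D}}\frac{(1-|z|^2)^\beta|u(z)\varphi'(z)^2|}{(1-|\varphi(z)|^2)^{\alpha+1}}\asymp\sup_{n\ge0}(n+1)^{\alpha+1}\|u(\varphi')^2\varphi^n\|_{\nu_\beta}<\infty.$$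
   Context: $\mathbb{D}$ is the open unit disk in $\mathbb{C}$, $H(\mathbb{D})$ the space of holomorphic functions on $\mathbb{D}$, and $S(\mathbb{D})$ the set of holomorphic self-maps of $\mathbb{D}$. For $u\in H(\mathbb{D})$, $\varphi\in S(\mathbb{D})$, the weighted composition operator is $uC_\varphi f(z)=u(z)f(\varphi(z))$. For $\alpha>0$, the Bloch type space $\mathcal{B}^\alpha$ consists of $f\in H(\mathbb{D})$ with $\sup_{z\in\mathbb{D}}(1-|z|^2)^\alpha|f'(z)|<\infty$, normed by $\|f\|_{\mathcal{B}_\alpha}=|f(0)|+\sup_{z}(1-|z|^2)^\alpha|f'(z)|$. For $\beta>0$, the Zygmund type space $\mathcal{Z}_\beta$ consists of $f\in H(\mathbb{D})$ with $\sup_z(1-|z|^2)^\beta|f''(z)|<\infty$, normed by $\|f\|_{\mathcal{Z}_\beta}=|f(0)|+|f'(0)|+\sup_z(1-|z|^2)^\beta|f''(z)|$. For a holomorphic function $g$ on $\mathbb{D}$, $\|g\|_{\nu_\beta}=\sup_{z\in\mathbb{D}}(1-|z|^2)^\beta|g(z)|$; $\varphi^n$ denotes the $n$-th power of $\varphi$. $A\asymp B$ means $B/C\le A\le CB$ for a positive constant $C$ (independent of $u,\varphi$). *)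

theory Defs
  imports "HOL-Complex_Analysis.Complex_Analysis"
begin

abbreviation unit_disc :: "complex set" where
  "unit_disc \<equiv> ball 0 1"

definition self_map_disc :: "(complex \<Rightarrow> complex) \<Rightarrow> bool" where
  "self_map_disc \<phi> \<longleftrightarrow> \<phi> holomorphic_on unit_disc \<and> \<phi> ` unit_disc \<subseteq> unit_disc"

definition bloch_type :: "real \<Rightarrow> (complex \<Rightarrow> complex) set" where
  "bloch_type \<alpha> = {f. f holomorphic_on unit_disc \<and>
     bdd_above ((\<lambda>z. (1 - (cmod z)\<^sup>2) powr \<alpha> * cmod (deriv f z)) ` unit_disc)}"

definition bloch_norm :: "real \<Rightarrow> (complex \<Rightarrow> complex) \<Rightarrow> real" where
  "bloch_norm \<alpha> f = cmod (f 0) +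
     (SUP z\<in>unit_disc. (1 - (cmod z)\<^sup>2) powr \<alpha> * cmod (deriv f z))"

definition zygmund_type :: "real \<Rightarrow> (complex \<Rightarrow> complex) set" where
  "zygmund_type \<beta> = {f. f holomorphic_on unit_disc \<and>
     bdd_above ((\<lambda>z. (1 - (cmod z)\<^sup>2) powr \<beta> * cmod (deriv (deriv f) z)) ` unit_disc)}"

definition zygmund_norm :: "real \<Rightarrow> (complex \<Rightarrow> complex) \<Rightarrow> real" where
  "zygmund_norm \<beta> f = cmod (f 0) + cmod (deriv f 0) +
     (SUP z\<in>unit_disc. (1 - (cmod z)\<^sup>2) powr \<beta> * cmod (deriv (deriv f) z))"

definition wcomp :: "(complex \<Rightarrow> complex) \<Rightarrow> (complex \<Rightarrow> complex) \<Rightarrow> (complex \<Rightarrow> complex) \<Rightarrow> (complex \<Rightarrow> complex)" where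
  "wcomp u \<phi> f = (\<lambda>z. u z * f (\<phi> z))"

definition wcomp_bounded_BZ :: "real \<Rightarrow> real \<Rightarrow> (complex \<Rightarrow> complex) \<Rightarrow> (complex \<Rightarrow> complex) \<Rightarrow> bool" where
  "wcomp_bounded_BZ \<alpha> \<beta> u \<phi> \<longleftrightarrow>
     (\<exists>C. \<forall>f\<in>bloch_type \<alpha>. wcomp u \<phi> f \<in> zygmund_type \<beta> \<and>
          zygmund_norm \<beta> (wcomp u \<phi> f) \<le> C * bloch_norm \<alpha> f)"

definition nu_norm :: "real \<Rightarrow> (complex \<Rightarrow> complex) \<Rightarrow> ereal" where
  "nu_norm \<beta> g = (SUP z\<in>unit_disc. ereal ((1 - (cmod z)\<^sup>2) powr \<beta> * cmod (g z)))"

definition g1 :: "(complex \<Rightarrow> complex) \<Rightarrow> (complex \<Rightarrow> complex) \<Rightarrow> complex \<Rightarrow> complex" where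
  "g1 u \<phi> z = 2 * deriv u z * deriv \<phi> z + u z * deriv (deriv \<phi>) z"

definition g2 :: "(complex \<Rightarrow> complex) \<Rightarrow> (complex \<Rightarrow> complex) \<Rightarrow> complex \<Rightarrow> complex" where
  "g2 u \<phi> z = u z * (deriv \<phi> z)\<^sup>2"

definition S1 :: "real \<Rightarrow> real \<Rightarrow> (complex \<Rightarrow> complex) \<Rightarrow> (complex \<Rightarrow> complex) \<Rightarrow> ereal" where
  "S1 \<alpha> \<beta> u \<phi> = (SUP z\<in>unit_disc.
      ereal ((1 - (cmod z)\<^sup>2) powr \<beta> * cmod (g1 u \<phi> z) / (1 - (cmod (\<phi> z))\<^sup>2) powr \<alpha>))"

definition T1 :: "real \<Rightarrow> real \<Rightarrow> (complex \<Rightarrow> complex) \<Rightarrow> (complex \<Rightarrow> complex) \<Rightarrow> ereal" where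
  "T1 \<alpha> \<beta> u \<phi> = (SUP n::nat. ereal ((real n + 1) powr \<alpha>) *
      nu_norm \<beta> (\<lambda>z. g1 u \<phi> z * (\<phi> z) ^ n))"

definition S2 :: "real \<Rightarrow> real \<Rightarrow> (complex \<Rightarrow> complex) \<Rightarrow> (complex \<Rightarrow> complex) \<Rightarrow> ereal" where
  "S2 \<alpha> \<beta> u \<phi> = (SUP z\<in>unit_disc.
      ereal ((1 - (cmod z)\<^sup>2) powr \<beta> * cmod (g2 u \<phi> z) / (1 - (cmod (\<phi> z))\<^sup>2) powr (\<alpha> + 1)))"

definition T2 :: "real \<Rightarrow> real \<Rightarrow> (complex \<Rightarrow> complex) \<Rightarrow> (complex \<Rightarrow> complex) \<Rightarrow> ereal" where
  "T2 \<alpha> \<beta> u \<phi> = (SUP n::nat. ereal ((real n + 1) powr (\<alpha> + 1)) *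
      nu_norm \<beta> (\<lambda>z. g2 u \<phi> z * (\<phi> z) ^ n))"

end

theory Submission
  imports Defs
begin


lemma lemA:
  fixes a x :: real and n :: nat
  assumes a: "0 < a" "a \<le> 2" and x: "0 \<le> x" "x < 1"
  shows "(real n + 1) powr a * x^n * (1 - x^2) powr a \<le> 16"
proof -
  define t where "t = 1 - x"
  have t: "0 < t" "t \<le> 1" using x by (auto simp: t_def)
  define s where "s = real n * t"
  have s0: "0 \<le> s" using t by (simp add: s_def)
  have "x \<le> exp (-t)" using exp_ge_add_one_self[of "-t"] by (simp add: t_def)
  hence "x^n \<le> exp (-t)^n" using x by (intro power_mono) auto
  also have "\<dots> = exp (- s)" by (simp add: s_def exp_of_nat_mult[symmetric])
  finally have xn: "x^n \<le> exp (-s)" .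
  have q0: "0 \<le> 1 - x^2" using x by (simp add: power_le_one abs_square_le_1)
  have "0 \<le> (1-x)*(1-x)" by simp
  hence q1: "1 - x^2 \<le> 2 * t" by (simp add: t_def power2_eq_square algebra_simps)
  have "(real n + 1) powr a * (1 - x^2) powr a = ((real n + 1) * (1 - x^2)) powr a"
    by (simp add: powr_mult q0)
  also have "\<dots> \<le> (2 * (s + 1)) powr a"
  proof (rule powr_mono2)
    have "(real n + 1) * (1 - x^2) \<le> (real n + 1) * (2*t)" using q1 by (intro mult_left_mono) auto
    also have "\<dots> \<le> 2 * (s+1)" using t by (simp add: s_def algebra_simps)
    finally show "(real n + 1) * (1 - x^2) \<le> 2 * (s + 1)" .
  qed (use a q0 in auto)
  also have "\<dots> \<le> (2 * (s + 1)) powr 2" using a s0 by (intro powr_mono) auto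
  also have "\<dots> = 4 * (s+1)^2" using s0 by (simp add: powr_numeral power2_eq_square algebra_simps)
  also have "\<dots> \<le> 16 * exp s"
  proof -
    have "s + 1 \<le> 2 * exp (s/2)" using exp_ge_add_one_self[of "s/2"] s0 by linarith
    hence "(s+1)^2 \<le> (2 * exp (s/2))^2" using s0 by (intro power_mono) auto
    also have "\<dots> = 4 * exp s" by (simp add: power_mult_distrib exp_double[symmetric] power2_eq_square exp_add[symmetric])
    finally show ?thesis by simp
  qed
  finally have A: "(real n + 1) powr a * (1 - x^2) powr a \<le> 16 * exp s" .
  have "(real n + 1) powr a * x^n * (1 - x^2) powr a = ((real n + 1) powr a * (1 - x^2) powr a) * x^n" by simp
  also have "\<dots> \<le> (16 * exp s) * exp (-s)"
    by (rule mult_mono[OF A xn]) (use x in auto)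
  also have "\<dots> = 16" by (simp add: exp_minus)
  finally show ?thesis .
qed

lemma floor_choice:
  fixes t c :: real
  assumes "0 < t" "0 < c"
  shows "\<exists>n::nat. real n * t \<le> c \<and> c \<le> (real n + 1) * t \<and> (t \<le> c \<longrightarrow> 1 \<le> n)"
proof -
  define n where "n = nat \<lfloor>c / t\<rfloor>"
  have f0: "0 \<le> \<lfloor>c/t\<rfloor>" using assms by simp
  have n: "real n = of_int \<lfloor>c/t\<rfloor>" using f0 by (simp add: n_def)
  have 1: "real n \<le> c / t" using n by linarith
  have 2: "c / t < real n + 1" using n by linarith
  show ?thesis
  proof (intro exI conjI impI)
    show "real n * t \<le> c" using 1 assms by (simp add: pos_le_divide_eq)
    show "c \<le> (real n + 1) * t" using 2 assms by (simp add: pos_divide_less_eq less_imp_le)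
    assume "t \<le> c" hence "1 \<le> c / t" using assms by simp
    hence "1 \<le> \<lfloor>c/t\<rfloor>" by linarith
    thus "1 \<le> n" by (simp add: n_def le_nat_iff)
  qed
qed

lemma lemB:
  fixes a x :: real
  assumes a: "0 < a" "a \<le> 2" and x: "0 \<le> x" "x < 1"
  shows "\<exists>n::nat. 1 \<le> 16 * ((real n + 1) powr a * x^n * (1 - x^2) powr a)"
proof -
  define t where "t = 1 - x"
  have t: "0 < t" "t \<le> 1" using x by (auto simp: t_def)
  obtain n :: nat where n1: "real n * t \<le> 1/2" and n2: "1/2 \<le> (real n + 1) * t"
    using floor_choice[of t "1/2"] t by auto
  have "1 - real n * t \<le> x^n" using Bernoulli_inequality[of "-t" n] t by (simp add: t_def algebra_simps)
  hence xn: "1/2 \<le> x^n" using n1 by linarith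
  have q: "t \<le> 1 - x^2" using x by (simp add: t_def power2_eq_square algebra_simps mult_left_le_one_le)
  have "(1/2) powr a \<le> ((real n + 1) * (1 - x^2)) powr a"
  proof (rule powr_mono2)
    have "(real n + 1) * t \<le> (real n + 1) * (1 - x^2)" using q by (intro mult_left_mono) auto
    thus "1/2 \<le> (real n + 1) * (1 - x^2)" using n2 by linarith
  qed (use a in auto)
  moreover have "(1/2::real) powr 2 \<le> (1/2) powr a" using a by (intro powr_mono') auto
  moreover have "(1/2::real) powr 2 = 1/4" by (simp add: powr_numeral power2_eq_square)
  ultimately have B: "1/4 \<le> (real n + 1) powr a * (1 - x^2) powr a"
    using x by (simp add: powr_mult)
  have "1/8 \<le> ((real n + 1) powr a * (1 - x^2) powr a) * x^n"
    using mult_mono[OF B xn] by simp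
  thus ?thesis by (intro exI[of _ n]) (simp add: algebra_simps)
qed

lemma equiv_gen:
  fixes a \<beta> :: real and g \<psi> :: "complex \<Rightarrow> complex"
  assumes a: "0 < a" "a \<le> 2" and \<psi>: "\<forall>z\<in>unit_disc. cmod (\<psi> z) < 1"
  shows "(SUP z\<in>unit_disc. ereal ((1 - (cmod z)\<^sup>2) powr \<beta> * cmod (g z) / (1 - (cmod (\<psi> z))\<^sup>2) powr a))
           \<le> ereal 16 * (SUP n::nat. ereal ((real n + 1) powr a) * nu_norm \<beta> (\<lambda>z. g z * (\<psi> z) ^ n))"
    (is "?S \<le> ereal 16 * ?T")
  and "(SUP n::nat. ereal ((real n + 1) powr a) * nu_norm \<beta> (\<lambda>z. g z * (\<psi> z) ^ n))
           \<le> ereal 16 * (SUP z\<in>unit_disc. ereal ((1 - (cmod z)\<^sup>2) powr \<beta> * cmod (g z) / (1 - (cmod (\<psi> z))\<^sup>2) powr a))"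
proof -
  show "?S \<le> ereal 16 * ?T"
  proof (rule SUP_least)
    fix z :: complex assume z: "z \<in> unit_disc"
    define v where "v = (1 - (cmod z)\<^sup>2) powr \<beta> * cmod (g z)"
    define x where "x = cmod (\<psi> z)"
    have v0: "0 \<le> v" by (simp add: v_def)
    have x: "0 \<le> x" "x < 1" using \<psi> z by (auto simp: x_def)
    have q: "0 < 1 - x^2" using x by (simp add: power_less_one_iff abs_square_less_1)
    obtain n :: nat where n: "1 \<le> 16 * ((real n + 1) powr a * x^n * (1 - x^2) powr a)"
      using lemB[OF a x] by blast
    have "v / (1 - x^2) powr a \<le> v * (16 * ((real n + 1) powr a * x^n * (1 - x^2) powr a)) / (1 - x^2) powr a"
      using n v0 q by (intro divide_right_mono) (auto intro: mult_left_mono[of 1, simplified] mult_le_cancel_left1[THEN iffD2])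
    also have "\<dots> = 16 * ((real n + 1) powr a * (v * x^n))" using q by simp
    finally have r: "v / (1 - x^2) powr a \<le> 16 * ((real n + 1) powr a * (v * x^n))" .
    have Y: "ereal (v * x^n) \<le> nu_norm \<beta> (\<lambda>z. g z * (\<psi> z) ^ n)"
      unfolding nu_norm_def using z
      by (intro SUP_upper2[of z]) (auto simp: v_def x_def norm_mult norm_power mult.assoc)
    have "ereal (v / (1 - x^2) powr a) \<le> ereal 16 * (ereal ((real n + 1) powr a) * ereal (v * x^n))"
      using r by simp
    also have "\<dots> \<le> ereal 16 * (ereal ((real n + 1) powr a) * nu_norm \<beta> (\<lambda>z. g z * (\<psi> z) ^ n))"
      by (intro ereal_mult_left_mono Y) auto
    also have "\<dots> \<le> ereal 16 * ?T"
      by (intro ereal_mult_left_mono SUP_upper) auto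
    finally show "ereal ((1 - (cmod z)\<^sup>2) powr \<beta> * cmod (g z) / (1 - (cmod (\<psi> z))\<^sup>2) powr a) \<le> ereal 16 * ?T"
      by (simp add: v_def x_def)
  qed
next
  show "?T \<le> ereal 16 * ?S"
  proof (rule SUP_least)
    fix n :: nat assume "n \<in> UNIV"
    have "ereal ((real n + 1) powr a) * nu_norm \<beta> (\<lambda>z. g z * (\<psi> z) ^ n) =
        (SUP z\<in>unit_disc. ereal ((real n + 1) powr a) * ereal ((1 - (cmod z)\<^sup>2) powr \<beta> * cmod (g z * (\<psi> z) ^ n)))"
      unfolding nu_norm_def by (rule SUP_ereal_mult_left[symmetric]) auto
    also have "\<dots> \<le> ereal 16 * ?S"
    proof (rule SUP_least)
      fix z :: complex assume z: "z \<in> unit_disc"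
      define v where "v = (1 - (cmod z)\<^sup>2) powr \<beta> * cmod (g z)"
      define x where "x = cmod (\<psi> z)"
      have v0: "0 \<le> v" by (simp add: v_def)
      have x: "0 \<le> x" "x < 1" using \<psi> z by (auto simp: x_def)
      have q: "0 < 1 - x^2" using x by (simp add: power_less_one_iff abs_square_less_1)
      have A: "(real n + 1) powr a * x^n * (1 - x^2) powr a \<le> 16" using lemA[OF a x] .
      have "(real n + 1) powr a * x^n \<le> 16 / (1 - x^2) powr a"
        using A q by (simp add: pos_le_divide_eq)
      hence "(real n + 1) powr a * (v * x^n) \<le> 16 * (v / (1 - x^2) powr a)"
        using v0 mult_left_mono[of "(real n + 1) powr a * x^n" "16 / (1 - x^2) powr a" v]
        by (simp add: algebra_simps)
      hence "ereal ((real n + 1) powr a) * ereal (v * x^n) \<le> ereal 16 * ereal (v / (1 - x^2) powr a)"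
        by simp
      also have "\<dots> \<le> ereal 16 * ?S"
        by (intro ereal_mult_left_mono SUP_upper2[OF z]) (auto simp: v_def x_def)
      finally show "ereal ((real n + 1) powr a) * ereal ((1 - (cmod z)\<^sup>2) powr \<beta> * cmod (g z * (\<psi> z) ^ n)) \<le> ereal 16 * ?S"
        by (simp add: v_def x_def norm_mult norm_power mult.assoc)
    qed
    finally show "ereal ((real n + 1) powr a) * nu_norm \<beta> (\<lambda>z. g z * (\<psi> z) ^ n) \<le> ereal 16 * ?S" .
  qed
qed



lemma D1:
  assumes h: "\<And>z. z \<in> unit_disc \<Longrightarrow> (h has_field_derivative h' z) (at z)"
    and phi: "\<phi> holomorphic_on unit_disc" "\<phi> ` unit_disc \<subseteq> unit_disc"
    and f: "f holomorphic_on unit_disc" and z: "z \<in> unit_disc"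
  shows "((\<lambda>z. h z * f (\<phi> z)) has_field_derivative (h' z * f (\<phi> z) + h z * (deriv f (\<phi> z) * deriv \<phi> z))) (at z)"
proof -
  have pz: "\<phi> z \<in> unit_disc" using phi(2) z by blast
  have c: "((\<lambda>z. f (\<phi> z)) has_field_derivative deriv f (\<phi> z) * deriv \<phi> z) (at z)"
    by (rule DERIV_chain2[OF holomorphic_derivI[OF f _ pz] holomorphic_derivI[OF phi(1) _ z]]) auto
  have e: "h' z * f (\<phi> z) + h z * (deriv f (\<phi> z) * deriv \<phi> z) = h' z * f (\<phi> z) + (deriv f (\<phi> z) * deriv \<phi> z) * h z"
    by simp
  show ?thesis by (subst e) (rule DERIV_mult[OF h[OF z] c])
qed

lemma wcomp_derivs:
  assumes u: "u holomorphic_on unit_disc"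
    and phi: "\<phi> holomorphic_on unit_disc" "\<phi> ` unit_disc \<subseteq> unit_disc"
    and f: "f holomorphic_on unit_disc"
  shows "wcomp u \<phi> f holomorphic_on unit_disc"
    and "\<And>z. z \<in> unit_disc \<Longrightarrow> deriv (wcomp u \<phi> f) z = deriv u z * f (\<phi> z) + u z * deriv f (\<phi> z) * deriv \<phi> z"
    and "\<And>z. z \<in> unit_disc \<Longrightarrow> deriv (deriv (wcomp u \<phi> f)) z =
           deriv (deriv u) z * f (\<phi> z) + g1 u \<phi> z * deriv f (\<phi> z) + g2 u \<phi> z * deriv (deriv f) (\<phi> z)"
proof -
  have o: "open unit_disc" by simp
  define E1 where "E1 = (\<lambda>z. deriv u z * f (\<phi> z) + (u z * deriv \<phi> z) * deriv f (\<phi> z))"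
  have d1: "(wcomp u \<phi> f has_field_derivative E1 z) (at z)" if z: "z \<in> unit_disc" for z
  proof -
    have "((\<lambda>z. u z * f (\<phi> z)) has_field_derivative (deriv u z * f (\<phi> z) + u z * (deriv f (\<phi> z) * deriv \<phi> z))) (at z)"
      by (rule D1[OF _ phi f z]) (rule holomorphic_derivI[OF u o])
    thus ?thesis by (simp add: wcomp_def E1_def algebra_simps)
  qed
  show "wcomp u \<phi> f holomorphic_on unit_disc"
    using d1 by (subst holomorphic_on_open[OF o]) blast
  have dF: "deriv (wcomp u \<phi> f) z = E1 z" if "z \<in> unit_disc" for z
    using d1[OF that] by (rule DERIV_imp_deriv)
  thus "\<And>z. z \<in> unit_disc \<Longrightarrow> deriv (wcomp u \<phi> f) z = deriv u z * f (\<phi> z) + u z * deriv f (\<phi> z) * deriv \<phi> z"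
    by (simp add: E1_def algebra_simps)
  fix z assume z: "z \<in> unit_disc"
  have hu': "deriv u holomorphic_on unit_disc" by (rule holomorphic_deriv[OF u o])
  have hp': "deriv \<phi> holomorphic_on unit_disc" by (rule holomorphic_deriv[OF phi(1) o])
  have hf': "deriv f holomorphic_on unit_disc" by (rule holomorphic_deriv[OF f o])
  have a1: "((\<lambda>z. deriv u z * f (\<phi> z)) has_field_derivative
      (deriv (deriv u) z * f (\<phi> z) + deriv u z * (deriv f (\<phi> z) * deriv \<phi> z))) (at z)"
    by (rule D1[OF _ phi f z]) (rule holomorphic_derivI[OF hu' o])
  have hh: "((\<lambda>z. u z * deriv \<phi> z) has_field_derivative (deriv u w * deriv \<phi> w + u w * deriv (deriv \<phi>) w)) (at w)"
    if w: "w \<in> unit_disc" for w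
    using DERIV_mult[OF holomorphic_derivI[OF u o w] holomorphic_derivI[OF hp' o w]]
    by (simp add: algebra_simps)
  have a2: "((\<lambda>z. (u z * deriv \<phi> z) * deriv f (\<phi> z)) has_field_derivative
      ((deriv u z * deriv \<phi> z + u z * deriv (deriv \<phi>) z) * deriv f (\<phi> z) + (u z * deriv \<phi> z) * (deriv (deriv f) (\<phi> z) * deriv \<phi> z))) (at z)"
    by (rule D1[OF hh phi hf' z])
  have dE: "(E1 has_field_derivative
      (deriv (deriv u) z * f (\<phi> z) + g1 u \<phi> z * deriv f (\<phi> z) + g2 u \<phi> z * deriv (deriv f) (\<phi> z))) (at z)"
  proof -
    have "(E1 has_field_derivative
       (deriv (deriv u) z * f (\<phi> z) + deriv u z * (deriv f (\<phi> z) * deriv \<phi> z)) +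
       ((deriv u z * deriv \<phi> z + u z * deriv (deriv \<phi>) z) * deriv f (\<phi> z) + (u z * deriv \<phi> z) * (deriv (deriv f) (\<phi> z) * deriv \<phi> z))) (at z)"
      unfolding E1_def by (rule DERIV_add[OF a1 a2])
    moreover have "(deriv (deriv u) z * f (\<phi> z) + deriv u z * (deriv f (\<phi> z) * deriv \<phi> z)) +
       ((deriv u z * deriv \<phi> z + u z * deriv (deriv \<phi>) z) * deriv f (\<phi> z) + (u z * deriv \<phi> z) * (deriv (deriv f) (\<phi> z) * deriv \<phi> z))
      = deriv (deriv u) z * f (\<phi> z) + g1 u \<phi> z * deriv f (\<phi> z) + g2 u \<phi> z * deriv (deriv f) (\<phi> z)"
      by (simp add: g1_def g2_def algebra_simps power2_eq_square)
    ultimately show ?thesis by simp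
  qed
  have "deriv (deriv (wcomp u \<phi> f)) z = deriv E1 z"
  proof (rule deriv_cong_ev)
    show "\<forall>\<^sub>F x in nhds z. deriv (wcomp u \<phi> f) x = E1 x"
      using eventually_nhds_in_open[OF o z] by (rule eventually_mono) (rule dF)
  qed simp
  also have "\<dots> = deriv (deriv u) z * f (\<phi> z) + g1 u \<phi> z * deriv f (\<phi> z) + g2 u \<phi> z * deriv (deriv f) (\<phi> z)"
    by (rule DERIV_imp_deriv[OF dE])
  finally show "deriv (deriv (wcomp u \<phi> f)) z =
           deriv (deriv u) z * f (\<phi> z) + g1 u \<phi> z * deriv f (\<phi> z) + g2 u \<phi> z * deriv (deriv f) (\<phi> z)" .
qed



definition bsup :: "real \<Rightarrow> (complex \<Rightarrow> complex) \<Rightarrow> real" where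
  "bsup \<alpha> f = (SUP z\<in>unit_disc. (1 - (cmod z)\<^sup>2) powr \<alpha> * cmod (deriv f z))"

lemma bloch_norm_eq: "bloch_norm \<alpha> f = cmod (f 0) + bsup \<alpha> f"
  by (simp add: bloch_norm_def bsup_def)

lemma bsup_upper:
  assumes "f \<in> bloch_type \<alpha>" "w \<in> unit_disc"
  shows "(1 - (cmod w)\<^sup>2) powr \<alpha> * cmod (deriv f w) \<le> bsup \<alpha> f"
  using assms unfolding bloch_type_def bsup_def by (auto intro: cSUP_upper)

lemma bsup_nonneg:
  assumes "f \<in> bloch_type \<alpha>"
  shows "0 \<le> bsup \<alpha> f"
  by (rule order_trans[OF _ bsup_upper[OF assms, of 0]]) auto

lemma disc_q: "w \<in> unit_disc \<Longrightarrow> 0 < 1 - (cmod w)\<^sup>2"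
  by (simp add: power_less_one_iff abs_square_less_1)

lemma bloch_d1:
  assumes "f \<in> bloch_type \<alpha>" "w \<in> unit_disc"
  shows "cmod (deriv f w) \<le> bsup \<alpha> f / (1 - (cmod w)\<^sup>2) powr \<alpha>"
  using bsup_upper[OF assms] disc_q[OF assms(2)] by (simp add: pos_le_divide_eq mult.commute)

lemma bloch_d2:
  assumes a: "0 \<le> \<alpha>" "\<alpha> \<le> 1" and f: "f \<in> bloch_type \<alpha>" and w: "w \<in> unit_disc"
  shows "cmod (deriv (deriv f) w) \<le> 16 * bsup \<alpha> f / (1 - (cmod w)\<^sup>2) powr (\<alpha> + 1)"
proof -
  define r where "r = cmod w"
  define \<rho> where "\<rho> = (1 - r) / 2"
  define q where "q = 1 - r\<^sup>2"
  define M where "M = bsup \<alpha> f"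
  have M0: "0 \<le> M" using bsup_nonneg[OF f] by (simp add: M_def)
  have r: "0 \<le> r" "r < 1" using w by (auto simp: r_def)
  have \<rho>: "0 < \<rho>" using r by (simp add: \<rho>_def)
  have q: "0 < q" using disc_q[OF w] by (simp add: q_def r_def)
  have "0 \<le> (1-r)*(1-r)" by simp
  hence q4: "q \<le> 4 * \<rho>" using r by (simp add: q_def \<rho>_def power2_eq_square algebra_simps mult_left_le_one_le)
  have P: "0 < q powr \<alpha>" using q by simp
  have sub: "cball w \<rho> \<subseteq> unit_disc"
  proof
    fix x assume "x \<in> cball w \<rho>"
    hence "cmod x \<le> r + \<rho>" using norm_triangle_ineq2[of x w] by (auto simp: dist_norm r_def norm_minus_commute)
    hence "cmod x < 1" using r unfolding \<rho>_def by (simp add: field_simps)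
    thus "x \<in> unit_disc" by simp
  qed
  have hf: "f holomorphic_on unit_disc" using f by (simp add: bloch_type_def)
  have hf': "deriv f holomorphic_on unit_disc" by (rule holomorphic_deriv[OF hf]) simp
  have B: "cmod (deriv f x) \<le> 4 * M / q powr \<alpha>" if x: "norm (w - x) = \<rho>" for x
  proof -
    have xr: "cmod x \<le> r + \<rho>" using norm_triangle_ineq2[of x w] x by (auto simp: r_def norm_minus_commute)
    have xD: "x \<in> unit_disc" using sub x by (auto simp: dist_norm)
    have qx: "0 < 1 - (cmod x)\<^sup>2" using disc_q[OF xD] .
    have "\<rho> \<le> 1 - cmod x" using xr by (simp add: \<rho>_def field_simps)
    also have "\<dots> \<le> 1 - (cmod x)\<^sup>2" using xD by (simp add: power2_eq_square mult_left_le_one_le)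
    finally have "q / 4 \<le> 1 - (cmod x)\<^sup>2" using q4 by simp
    hence "(q/4) powr \<alpha> \<le> (1 - (cmod x)\<^sup>2) powr \<alpha>" using q a by (intro powr_mono2) auto
    moreover have "(q/4) powr \<alpha> = q powr \<alpha> * (1/4) powr \<alpha>" using q by (simp add: powr_mult[symmetric])
    moreover have "(1/4::real) powr 1 \<le> (1/4) powr \<alpha>" using a by (intro powr_mono') auto
    hence "q powr \<alpha> * (1/4) \<le> q powr \<alpha> * (1/4) powr \<alpha>" using P by (intro mult_left_mono) auto
    ultimately have L: "q powr \<alpha> / 4 \<le> (1 - (cmod x)\<^sup>2) powr \<alpha>" by simp
    have "cmod (deriv f x) \<le> M / (1 - (cmod x)\<^sup>2) powr \<alpha>" using bloch_d1[OF f xD] by (simp add: M_def)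
    also have "\<dots> \<le> M / (q powr \<alpha> / 4)"
    proof (rule divide_left_mono[OF L M0])
      have "0 < (1 - (cmod x)\<^sup>2) powr \<alpha>" using qx by simp
      thus "0 < (1 - (cmod x)\<^sup>2) powr \<alpha> * (q powr \<alpha> / 4)" using P by simp
    qed
    finally show ?thesis by (simp add: mult.commute)
  qed
  have "norm ((deriv ^^ 1) (deriv f) w) \<le> (fact 1) * (4 * M / q powr \<alpha>) / \<rho>^1"
  proof (rule Cauchy_inequality[OF _ _ \<rho> B])
    show "deriv f holomorphic_on ball w \<rho>" using hf' sub ball_subset_cball by (blast intro: holomorphic_on_subset)
    show "continuous_on (cball w \<rho>) (deriv f)"
      using holomorphic_on_imp_continuous_on[OF hf'] sub by (blast intro: continuous_on_subset)
  qed
  hence "cmod (deriv (deriv f) w) \<le> (4 * M / q powr \<alpha>) / \<rho>" by simp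
  also have "\<dots> \<le> (4 * M / q powr \<alpha>) / (q / 4)"
    using q4 q P M0 by (intro divide_left_mono) auto
  also have "\<dots> = 16 * M / (q powr \<alpha> * q)" using q by (simp add: field_simps)
  also have "q powr \<alpha> * q = q powr (\<alpha> + 1)" using q by (simp add: powr_add)
  finally show ?thesis by (simp add: M_def q_def r_def)
qed



lemma bloch_d0:
  assumes a: "0 < \<alpha>" "\<alpha> < 1" and f: "f \<in> bloch_type \<alpha>" and w: "w \<in> unit_disc"
  shows "cmod (f w - f 0) \<le> bsup \<alpha> f / (1 - \<alpha>)"
proof (cases "w = 0")
  case True thus ?thesis using bsup_nonneg[OF f] a by simp
next
  case False
  define r where "r = cmod w"
  define M where "M = bsup \<alpha> f"
  have M0: "0 \<le> M" using bsup_nonneg[OF f] by (simp add: M_def)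
  have r: "0 < r" "r < 1" using w False by (auto simp: r_def)
  have hf: "f holomorphic_on unit_disc" using f by (simp add: bloch_type_def)
  define F where "F = (\<lambda>t::real. f (of_real t * w))"
  define G where "G = (\<lambda>t::real. (- M / (1 - \<alpha>)) * (1 - t * r) powr (1 - \<alpha>))"
  define G' where "G' = (\<lambda>t::real. M * r * (1 - t * r) powr (- \<alpha>))"
  define F' where "F' = (\<lambda>t::real. deriv f (of_real t * w) * w)"
  have inD: "of_real t * w \<in> unit_disc" if "0 \<le> t" "t \<le> 1" for t :: real
  proof -
    have "cmod (of_real t * w) = t * r" using that by (simp add: norm_mult r_def)
    also have "\<dots> < 1" using that r by (smt (verit) mult_left_le_one_le)
    finally show ?thesis by simp
  qed
  have dF: "(F has_vector_derivative F' t) (at t)" if "0 \<le> t" "t \<le> 1" for t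
  proof -
    have "((\<lambda>\<zeta>. f (\<zeta> * w)) has_field_derivative deriv f (of_real t * w) * w) (at (of_real t))"
    proof -
      have hd: "(f has_field_derivative deriv f (of_real t * w)) (at (of_real t * w))"
        using holomorphic_derivI[OF hf _ inD[OF that]] by simp
      have "((\<lambda>\<zeta>. \<zeta> * w) has_field_derivative w) (at (of_real t))"
        by (auto intro!: derivative_eq_intros)
      from DERIV_chain2[where g="\<lambda>\<zeta>. \<zeta> * w" and x="of_real t", OF _ this] hd show ?thesis by simp
    qed
    thus ?thesis unfolding F_def F'_def by (rule has_vector_derivative_real_field)
  qed
  have tr: "0 < 1 - t * r" if "0 \<le> t" "t \<le> 1" for t
    using that r by (smt (verit) mult_left_le_one_le)
  have dG: "(G has_vector_derivative G' t) (at t)" if "0 \<le> t" "t \<le> 1" for t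
  proof -
    have "((\<lambda>t. 1 - t * r) has_real_derivative - r) (at t)" by (auto intro!: derivative_eq_intros)
    from DERIV_chain2[OF has_real_derivative_powr[OF tr[OF that], of "1 - \<alpha>"] this]
    have "((\<lambda>t. (1 - t * r) powr (1 - \<alpha>)) has_real_derivative (1 - \<alpha>) * (1 - t * r) powr (1 - \<alpha> - 1) * - r) (at t)" .
    hence "(G has_real_derivative (- M / (1 - \<alpha>)) * ((1 - \<alpha>) * (1 - t * r) powr (1 - \<alpha> - 1) * - r)) (at t)"
      unfolding G_def by (rule DERIV_cmult)
    moreover have "(- M / (1 - \<alpha>)) * ((1 - \<alpha>) * (1 - t * r) powr (1 - \<alpha> - 1) * - r) = G' t"
      using a by (simp add: G'_def field_simps)
    ultimately show ?thesis by (simp add: has_real_derivative_iff_has_vector_derivative)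
  qed
  have bnd: "norm (F' t) \<le> G' t" if "0 < t" "t < 1" for t
  proof -
    have t: "0 \<le> t" "t \<le> 1" using that by auto
    have D: "of_real t * w \<in> unit_disc" using inD[OF t] .
    have e: "cmod (of_real t * w) = t * r" using t by (simp add: norm_mult r_def)
    have le: "1 - t * r \<le> 1 - (cmod (of_real t * w))\<^sup>2"
    proof -
      have "t * r \<le> 1" using tr[OF t] by simp
      hence "(t*r) * (t*r) \<le> t * r" using t r by (intro mult_left_le_one_le) auto
      thus ?thesis using e by (simp add: power2_eq_square)
    qed
    have "cmod (deriv f (of_real t * w)) \<le> M / (1 - (cmod (of_real t * w))\<^sup>2) powr \<alpha>"
      using bloch_d1[OF f D] by (simp add: M_def)
    also have "\<dots> \<le> M / (1 - t * r) powr \<alpha>"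
      using M0 tr[OF t] le a by (intro divide_left_mono powr_mono2 mult_pos_pos) auto
    finally have "cmod (deriv f (of_real t * w)) * r \<le> M / (1 - t * r) powr \<alpha> * r"
      using r by (intro mult_right_mono) auto
    thus ?thesis by (simp add: F'_def G'_def norm_mult r_def powr_minus divide_inverse mult_ac)
  qed
  have contF: "continuous_on {0..1} F"
    using dF by (intro continuous_at_imp_continuous_on ballI has_vector_derivative_continuous) auto
  have contG: "continuous_on {0..1} G"
    using dG by (intro continuous_at_imp_continuous_on ballI has_vector_derivative_continuous) auto
  have "norm (F 1 - F 0) \<le> G 1 - G 0"
    by (rule differentiable_bound_general[OF _ contF contG dF dG bnd]) auto
  also have "G 1 - G 0 = M / (1 - \<alpha>) * (1 - (1 - r) powr (1 - \<alpha>))"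
    by (simp add: G_def algebra_simps)
  also have "\<dots> \<le> M / (1 - \<alpha>)" using a M0 by (intro mult_left_le) auto
  finally show ?thesis by (simp add: F_def M_def)
qed



lemma DERIV_pw: "((\<lambda>z::complex. z ^ Suc k) has_field_derivative of_nat (Suc k) * z ^ k) (at z)"
proof -
  have "((\<lambda>z. z ^ Suc k) has_field_derivative of_nat (Suc k) * (1 * z ^ (Suc k - Suc 0))) (at z)"
    by (rule DERIV_power[OF DERIV_ident])
  thus ?thesis by simp
qed

lemma deriv_pw: "deriv (\<lambda>z::complex. z ^ Suc k) = (\<lambda>z. of_nat (Suc k) * z ^ k)"
  by (rule ext, rule DERIV_imp_deriv, rule DERIV_pw)

lemma deriv2_pw: "deriv (deriv (\<lambda>z::complex. z ^ Suc (Suc k))) = (\<lambda>z. of_nat (Suc (Suc k)) * (of_nat (Suc k) * z ^ k))"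
  unfolding deriv_pw by (rule ext, rule DERIV_imp_deriv, rule DERIV_cmult, rule DERIV_pw)

lemma deriv_const1: "deriv (\<lambda>z::complex. 1) = (\<lambda>z. 0)"
  by (rule ext, rule DERIV_imp_deriv) (auto intro!: derivative_eq_intros)

lemma const1_bloch: "(\<lambda>z::complex. 1) \<in> bloch_type \<alpha>" "bloch_norm \<alpha> (\<lambda>z. 1) = 1"
  by (auto simp: bloch_type_def bloch_norm_def deriv_const1)

lemma pw_bloch:
  assumes a: "0 < \<alpha>" "\<alpha> < 1"
  shows "(\<lambda>z::complex. z ^ Suc k) \<in> bloch_type \<alpha>"
    and "bloch_norm \<alpha> (\<lambda>z::complex. z ^ Suc k) \<le> 16 * (real k + 1) powr (1 - \<alpha>)"
proof -
  have el: "(1 - (cmod z)\<^sup>2) powr \<alpha> * cmod (deriv (\<lambda>z::complex. z ^ Suc k) z) \<le> 16 * (real k + 1) powr (1 - \<alpha>)"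
    if z: "z \<in> unit_disc" for z
  proof -
    have x: "0 \<le> cmod z" "cmod z < 1" using z by auto
    have A: "(real k + 1) powr \<alpha> * (cmod z)^k * (1 - (cmod z)\<^sup>2) powr \<alpha> \<le> 16"
      using lemA[of \<alpha> "cmod z" k] a x by auto
    have "(real k + 1) powr (\<alpha> + (1 - \<alpha>)) = (real k + 1) powr \<alpha> * (real k + 1) powr (1 - \<alpha>)"
      by (rule powr_add)
    hence sk: "real k + 1 = (real k + 1) powr \<alpha> * (real k + 1) powr (1 - \<alpha>)" by simp
    have "cmod (of_nat (Suc k)::complex) = real (Suc k)" by (rule norm_of_nat)
    hence c: "cmod (1 + (of_nat k::complex)) = real k + 1" by simp
    have d: "cmod (deriv (\<lambda>z::complex. z ^ Suc k) z) = (real k + 1) * cmod z ^ k"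
      unfolding deriv_pw by (simp add: norm_mult norm_power c)
    have "(1 - (cmod z)\<^sup>2) powr \<alpha> * cmod (deriv (\<lambda>z::complex. z ^ Suc k) z)
        = ((real k + 1) powr \<alpha> * (cmod z)^k * (1 - (cmod z)\<^sup>2) powr \<alpha>) * (real k + 1) powr (1 - \<alpha>)"
      unfolding d by (subst sk) (simp add: mult_ac)
    also have "\<dots> \<le> 16 * (real k + 1) powr (1 - \<alpha>)"
      using A by (intro mult_right_mono) auto
    finally show ?thesis .
  qed
  show "(\<lambda>z::complex. z ^ Suc k) \<in> bloch_type \<alpha>"
    unfolding bloch_type_def using el by (auto intro!: holomorphic_intros bdd_aboveI2)
  have "(SUP z\<in>unit_disc. (1 - (cmod z)\<^sup>2) powr \<alpha> * cmod (deriv (\<lambda>z::complex. z ^ Suc k) z)) \<le> 16 * (real k + 1) powr (1 - \<alpha>)"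
    using el by (intro cSUP_least) auto
  thus "bloch_norm \<alpha> (\<lambda>z::complex. z ^ Suc k) \<le> 16 * (real k + 1) powr (1 - \<alpha>)"
    by (simp add: bloch_norm_def)
qed



lemma suff:
  assumes a: "0 < \<alpha>" "\<alpha> < 1"
    and u: "u holomorphic_on unit_disc" and phi: "self_map_disc \<phi>"
    and uZ: "u \<in> zygmund_type \<beta>"
    and B1: "\<And>z. z \<in> unit_disc \<Longrightarrow> (1 - (cmod z)\<^sup>2) powr \<beta> * cmod (g1 u \<phi> z) / (1 - (cmod (\<phi> z))\<^sup>2) powr \<alpha> \<le> B1"
    and B2: "\<And>z. z \<in> unit_disc \<Longrightarrow> (1 - (cmod z)\<^sup>2) powr \<beta> * cmod (g2 u \<phi> z) / (1 - (cmod (\<phi> z))\<^sup>2) powr (\<alpha> + 1) \<le> B2"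
  shows "wcomp_bounded_BZ \<alpha> \<beta> u \<phi>"
proof -
  have hp: "\<phi> holomorphic_on unit_disc" and pD: "\<phi> ` unit_disc \<subseteq> unit_disc"
    using phi by (auto simp: self_map_disc_def)
  have pDz: "\<phi> z \<in> unit_disc" if "z \<in> unit_disc" for z using pD that by blast
  obtain Mu where Mu': "\<forall>z\<in>unit_disc. (1 - (cmod z)\<^sup>2) powr \<beta> * cmod (deriv (deriv u) z) \<le> Mu"
    using uZ unfolding zygmund_type_def bdd_above_def by auto
  have Mu: "\<And>z. z \<in> unit_disc \<Longrightarrow> (1 - (cmod z)\<^sup>2) powr \<beta> * cmod (deriv (deriv u) z) \<le> Mu"
    using Mu' by blast
  have z0: "(0::complex) \<in> unit_disc" by simp
  have Mu0: "0 \<le> Mu" by (rule order_trans[OF _ Mu[OF z0]]) simp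
  have B10: "0 \<le> B1" by (rule order_trans[OF _ B1[OF z0]]) simp
  have B20: "0 \<le> B2" by (rule order_trans[OF _ B2[OF z0]]) simp
  define Kb where "Kb = 1 + 1 / (1 - \<alpha>)"
  have "0 < 1 / (1 - \<alpha>)" using a by simp
  hence Kb: "0 < Kb" unfolding Kb_def by linarith
  define P0 where "P0 = (1 - (cmod (\<phi> 0))\<^sup>2) powr \<alpha>"
  have P0: "0 < P0" using disc_q[OF pDz[OF z0]] by (simp add: P0_def)
  define L where "L = Mu * Kb + B1 + 16 * B2"
  define C where "C = cmod (u 0) * Kb + cmod (deriv u 0) * Kb + cmod (u 0) * cmod (deriv \<phi> 0) / P0 + L"
  show ?thesis unfolding wcomp_bounded_BZ_def
  proof (intro exI[of _ C] ballI conjI)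
    fix f assume f: "f \<in> bloch_type \<alpha>"
    define N where "N = bloch_norm \<alpha> f"
    have N: "N = cmod (f 0) + bsup \<alpha> f" by (simp add: N_def bloch_norm_eq)
    have bs0: "0 \<le> bsup \<alpha> f" by (rule bsup_nonneg[OF f])
    have hf: "f holomorphic_on unit_disc" using f by (simp add: bloch_type_def)
    have fw: "cmod (f w) \<le> Kb * N" if w: "w \<in> unit_disc" for w
    proof -
      have "cmod (f w) \<le> cmod (f 0) + cmod (f w - f 0)" using norm_triangle_ineq2[of "f w" "f 0"] by simp
      also have "\<dots> \<le> cmod (f 0) + bsup \<alpha> f / (1 - \<alpha>)" using bloch_d0[OF a f w] by simp
      also have "bsup \<alpha> f / (1 - \<alpha>) \<le> N / (1 - \<alpha>)" using a N by (intro divide_right_mono) auto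
      hence "cmod (f 0) + bsup \<alpha> f / (1 - \<alpha>) \<le> N + N / (1 - \<alpha>)" using N bs0 by linarith
      also have "\<dots> = Kb * N" by (simp add: Kb_def algebra_simps)
      finally show ?thesis .
    qed
    have f1w: "(1 - (cmod w)\<^sup>2) powr \<alpha> * cmod (deriv f w) \<le> N" if w: "w \<in> unit_disc" for w
      using bsup_upper[OF f w] N norm_ge_zero[of "f 0"] by linarith
    have f2w: "(1 - (cmod w)\<^sup>2) powr (\<alpha> + 1) * cmod (deriv (deriv f) w) \<le> 16 * N" if w: "w \<in> unit_disc" for w
    proof -
      have Q: "0 < (1 - (cmod w)\<^sup>2) powr (\<alpha> + 1)" using disc_q[OF w] by simp
      have "cmod (deriv (deriv f) w) \<le> 16 * bsup \<alpha> f / (1 - (cmod w)\<^sup>2) powr (\<alpha> + 1)"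
        using bloch_d2[OF _ _ f w] a by simp
      hence "(1 - (cmod w)\<^sup>2) powr (\<alpha> + 1) * cmod (deriv (deriv f) w) \<le> 16 * bsup \<alpha> f"
        using Q by (simp add: pos_le_divide_eq mult.commute)
      thus ?thesis using N norm_ge_zero[of "f 0"] by linarith
    qed
    have N0: "0 \<le> N" using N bs0 by simp
    define F where "F = wcomp u \<phi> f"
    note D = wcomp_derivs[OF u hp pD hf]
    have key: "(1 - (cmod z)\<^sup>2) powr \<beta> * cmod (deriv (deriv F) z) \<le> L * N" if z: "z \<in> unit_disc" for z
    proof -
      define w where "w = \<phi> z"
      have w: "w \<in> unit_disc" using pDz[OF z] by (simp add: w_def)
      define v where "v = (1 - (cmod z)\<^sup>2) powr \<beta>"
      have v0: "0 \<le> v" by (simp add: v_def)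
      define P where "P = (1 - (cmod w)\<^sup>2) powr \<alpha>"
      define Q where "Q = (1 - (cmod w)\<^sup>2) powr (\<alpha> + 1)"
      have P: "0 < P" using disc_q[OF w] by (simp add: P_def)
      have Q: "0 < Q" using disc_q[OF w] by (simp add: Q_def)
      have t1: "v * cmod (deriv (deriv u) z * f w) \<le> Mu * (Kb * N)"
      proof -
        have "v * cmod (deriv (deriv u) z * f w) = (v * cmod (deriv (deriv u) z)) * cmod (f w)"
          by (simp add: norm_mult)
        also have "\<dots> \<le> Mu * (Kb * N)"
          using Mu[OF z] fw[OF w] Mu0 by (intro mult_mono) (auto simp: v_def)
        finally show ?thesis .
      qed
      have t2: "v * cmod (g1 u \<phi> z * deriv f w) \<le> B1 * N"
      proof -
        have "v * cmod (g1 u \<phi> z * deriv f w) = (v * cmod (g1 u \<phi> z) / P) * (P * cmod (deriv f w))"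
          using P by (simp add: norm_mult)
        also have "\<dots> \<le> B1 * N"
          using B1[OF z] f1w[OF w] B10 P v0 by (intro mult_mono) (auto simp: v_def w_def P_def)
        finally show ?thesis .
      qed
      have t3: "v * cmod (g2 u \<phi> z * deriv (deriv f) w) \<le> B2 * (16 * N)"
      proof -
        have "v * cmod (g2 u \<phi> z * deriv (deriv f) w) = (v * cmod (g2 u \<phi> z) / Q) * (Q * cmod (deriv (deriv f) w))"
          using Q by (simp add: norm_mult)
        also have "\<dots> \<le> B2 * (16 * N)"
          using B2[OF z] f2w[OF w] B20 Q v0 by (rule_tac mult_mono) (auto simp: v_def w_def Q_def)
        finally show ?thesis .
      qed
      have "cmod (deriv (deriv F) z) \<le> cmod (deriv (deriv u) z * f w) + cmod (g1 u \<phi> z * deriv f w)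
              + cmod (g2 u \<phi> z * deriv (deriv f) w)"
        unfolding F_def D(3)[OF z] w_def by (intro order_trans[OF norm_triangle_ineq] add_mono) auto
      hence "v * cmod (deriv (deriv F) z) \<le> v * cmod (deriv (deriv u) z * f w) + v * cmod (g1 u \<phi> z * deriv f w)
              + v * cmod (g2 u \<phi> z * deriv (deriv f) w)"
        using v0 by (metis distrib_left mult_left_mono)
      also have "\<dots> \<le> L * N" using t1 t2 t3 by (simp add: L_def algebra_simps)
      finally show ?thesis by (simp add: v_def)
    qed
    show "wcomp u \<phi> f \<in> zygmund_type \<beta>"
      unfolding zygmund_type_def using D(1) key by (auto simp: F_def intro!: bdd_aboveI2)
    have sup: "(SUP z\<in>unit_disc. (1 - (cmod z)\<^sup>2) powr \<beta> * cmod (deriv (deriv F) z)) \<le> L * N"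
      using key by (intro cSUP_least) auto
    have F0: "cmod (F 0) \<le> cmod (u 0) * Kb * N"
      using mult_left_mono[OF fw[OF pDz[OF z0]], of "cmod (u 0)"] by (simp add: F_def wcomp_def norm_mult mult.assoc)
    have F1: "cmod (deriv F 0) \<le> cmod (deriv u 0) * Kb * N + cmod (u 0) * cmod (deriv \<phi> 0) / P0 * N"
    proof -
      have e: "deriv F 0 = deriv u 0 * f (\<phi> 0) + u 0 * deriv f (\<phi> 0) * deriv \<phi> 0"
        unfolding F_def by (rule D(2)[OF z0])
      have a1: "cmod (deriv u 0 * f (\<phi> 0)) \<le> cmod (deriv u 0) * Kb * N"
        using mult_left_mono[OF fw[OF pDz[OF z0]], of "cmod (deriv u 0)"] by (simp add: norm_mult mult.assoc)
      have "P0 * cmod (deriv f (\<phi> 0)) \<le> N" using f1w[OF pDz[OF z0]] by (simp add: P0_def)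
      hence fd: "cmod (deriv f (\<phi> 0)) \<le> N / P0" using P0 by (simp add: pos_le_divide_eq mult.commute)
      have a2: "cmod (u 0 * deriv f (\<phi> 0) * deriv \<phi> 0) \<le> cmod (u 0) * cmod (deriv \<phi> 0) / P0 * N"
        using mult_left_mono[OF fd, of "cmod (u 0) * cmod (deriv \<phi> 0)"] by (simp add: norm_mult mult_ac)
      show ?thesis unfolding e using norm_triangle_ineq[of "deriv u 0 * f (\<phi> 0)" "u 0 * deriv f (\<phi> 0) * deriv \<phi> 0"] a1 a2
        by linarith
    qed
    have "zygmund_norm \<beta> F \<le> cmod (u 0) * Kb * N + (cmod (deriv u 0) * Kb * N + cmod (u 0) * cmod (deriv \<phi> 0) / P0 * N) + L * N"
      unfolding zygmund_norm_def using F0 F1 sup by linarith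
    also have "\<dots> = C * N" by (simp add: C_def algebra_simps)
    finally show "zygmund_norm \<beta> (wcomp u \<phi> f) \<le> C * bloch_norm \<alpha> f" by (simp add: F_def N_def)
  qed
qed



lemma alg:
  fixes X Z Y1 Y2 E P Q K x n :: real
  assumes n: "1 \<le> n" and x: "3/4 \<le> x" and nn: "0 \<le> X" "0 \<le> Z" "0 \<le> Y1" "0 \<le> Y2" "0 < E" "0 \<le> P" "0 \<le> Q" "0 \<le> K"
    and h1: "Y1 * E \<le> 2 * K" and h2: "Y2 * E \<le> 2 * K"
    and h3: "n * Z \<le> Y1 + Y2" and h4: "x * X \<le> Y1 + (n + 1) * Z"
    and h5: "1 \<le> 4 * E * P" and h6: "1 \<le> 16 * (n + 2) * E * Q"
  shows "X \<le> 56 * K * P" "Z \<le> 192 * K * Q"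
proof -
  have nZE: "n * Z * E \<le> 4 * K"
  proof -
    have "n * Z * E \<le> (Y1 + Y2) * E" using h3 nn by (intro mult_right_mono) auto
    thus ?thesis using h1 h2 by (simp add: algebra_simps)
  qed
  have ZE: "Z * (n + 2) * E \<le> 12 * K"
  proof -
    have "Z * (n + 2) * E \<le> 3 * (n * Z * E)"
    proof -
      have "Z * E * (n + 2) \<le> Z * E * (3 * n)" using n nn by (intro mult_left_mono) auto
      thus ?thesis by (simp add: algebra_simps)
    qed
    thus ?thesis using nZE by linarith
  qed
  show "Z \<le> 192 * K * Q"
  proof -
    have "Z \<le> Z * (16 * (n + 2) * E * Q)" using h6 nn by (simp add: mult_le_cancel_left1)
    also have "\<dots> = 16 * Q * (Z * (n + 2) * E)" by (simp add: algebra_simps)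
    also have "\<dots> \<le> 16 * Q * (12 * K)" using ZE nn by (intro mult_left_mono) auto
    finally show ?thesis by (simp add: mult_ac)
  qed
  have xXE: "x * X * E \<le> 10 * K"
  proof -
    have "x * X * E \<le> (Y1 + (n + 1) * Z) * E" using h4 nn by (intro mult_right_mono) auto
    also have "\<dots> = Y1 * E + (n + 1) * Z * E" by (simp add: algebra_simps)
    also have "(n + 1) * Z * E \<le> 2 * (n * Z * E)"
    proof -
      have "Z * E * (n + 1) \<le> Z * E * (2 * n)" using n nn by (intro mult_left_mono) auto
      thus ?thesis by (simp add: algebra_simps)
    qed
    hence "Y1 * E + (n + 1) * Z * E \<le> 10 * K" using h1 nZE by linarith
    finally show ?thesis by simp
  qed
  have XE: "X * E \<le> 14 * K"
  proof -
    have "(3/4) * (X * E) \<le> x * (X * E)" using x nn by (intro mult_right_mono) auto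
    also have "x * (X * E) = x * X * E" by (simp add: mult.assoc)
    finally have "(3/4) * (X * E) \<le> 10 * K" using xXE by linarith
    thus ?thesis using nn by linarith
  qed
  show "X \<le> 56 * K * P"
  proof -
    have "X \<le> X * (4 * E * P)" using h5 nn by (simp add: mult_le_cancel_left1)
    also have "\<dots> = 4 * P * (X * E)" by (simp add: algebra_simps)
    also have "\<dots> \<le> 4 * P * (14 * K)" using XE nn by (intro mult_left_mono) auto
    finally show ?thesis by (simp add: mult_ac)
  qed
qed



lemma quarter_powr: fixes a y :: real assumes "0 \<le> a" "a \<le> 1" "1/4 \<le> y" shows "1/4 \<le> y powr a"
proof -
  have "(1/4::real) powr 1 \<le> (1/4) powr a" using assms by (intro powr_mono') auto
  also have "\<dots> \<le> y powr a" using assms by (intro powr_mono2) auto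
  finally show ?thesis by simp
qed

lemma sep_core:
  fixes G1 G2 W :: complex and v K \<alpha> :: real
  assumes a: "0 < \<alpha>" "\<alpha> < 1" and v0: "0 \<le> v" and K0: "0 \<le> K" and W: "cmod W < 1"
  and H: "\<And>k::nat. v * cmod (G1 * (of_nat (Suc (Suc k)) * W ^ Suc k) + G2 * (of_nat (Suc (Suc k)) * (of_nat (Suc k) * W ^ k)))
            \<le> K * (real k + 2) powr (1 - \<alpha>)"
  and H1: "v * cmod G1 \<le> K"
  shows "v * cmod G1 / (1 - (cmod W)\<^sup>2) powr \<alpha> \<le> 56 * K"
    and "v * cmod G2 / (1 - (cmod W)\<^sup>2) powr (\<alpha> + 1) \<le> 192 * K"
proof -
  define x where "x = cmod W"
  define q where "q = 1 - x\<^sup>2"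
  define P where "P = q powr \<alpha>"
  define Q where "Q = q powr (\<alpha> + 1)"
  have x: "0 \<le> x" "x < 1" using W by (auto simp: x_def)
  have q: "0 < q" using x by (simp add: q_def power_less_one_iff abs_square_less_1)
  have P: "0 < P" using q by (simp add: P_def)
  have QP: "Q = P * q" using q by (simp add: P_def Q_def powr_add)
  have Q: "0 < Q" using P q QP by simp
  have Hfac: "v * ((real k + 2) * x^k * cmod (G1 * W + of_nat (Suc k) * G2)) \<le> K * (real k + 2) powr (1 - \<alpha>)" for k
  proof -
    have e: "G1 * (of_nat (Suc (Suc k)) * W ^ Suc k) + G2 * (of_nat (Suc (Suc k)) * (of_nat (Suc k) * W ^ k))
        = of_nat (Suc (Suc k)) * W ^ k * (G1 * W + of_nat (Suc k) * G2)"
      by (simp add: algebra_simps)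
    have "cmod (of_nat (Suc (Suc k)) :: complex) = real (Suc (Suc k))" by (rule norm_of_nat)
    hence c: "cmod (2 + of_nat k :: complex) = real k + 2" by simp
    show ?thesis using H[of k] unfolding e by (simp add: norm_mult norm_power c x_def)
  qed
  have G1s: "v * cmod G1 \<le> 56 * K * P \<and> v * cmod G2 \<le> 192 * K * Q"
  proof (cases "x < 3/4")
    case True
    have "x^2 \<le> (3/4)^2" using x True by (intro power_mono) auto
    hence q4: "1/4 \<le> q" by (simp add: q_def power2_eq_square)
    have P4: "1/4 \<le> P" unfolding P_def using quarter_powr[OF _ _ q4, of \<alpha>] a by simp
    have Q16: "1/16 \<le> Q"
    proof -
      have "(1/4) * (1/4) \<le> P * q" using P4 q4 by (intro mult_mono) auto
      thus ?thesis using QP by simp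
    qed
    have g1: "v * cmod G1 \<le> 56 * K * P"
    proof -
      have "K * (1/4) \<le> K * P" using P4 K0 by (intro mult_left_mono) auto
      moreover have "0 \<le> K * P" using K0 P by simp
      ultimately have "v * cmod G1 \<le> 56 * (K * P)" using H1 by linarith
      thus ?thesis by (simp add: mult.assoc)
    qed
    have H0: "v * cmod (G1 * (2 * W) + 2 * G2) \<le> 2 * K"
    proof -
      have "v * cmod (G1 * (2 * W) + 2 * G2) \<le> K * 2 powr (1 - \<alpha>)"
        using H[of 0] by (simp add: mult_ac)
      also have "(2::real) powr (1 - \<alpha>) \<le> 2 powr 1" using a by (intro powr_mono) auto
      hence "K * 2 powr (1 - \<alpha>) \<le> K * 2" using K0 by (intro mult_left_mono) auto
      finally show ?thesis by simp
    qed
    have "v * cmod (2 * G2) \<le> v * cmod (G1 * (2 * W) + 2 * G2) + v * cmod (G1 * (2 * W))"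
    proof -
      have "cmod (2 * G2) \<le> cmod (G1 * (2 * W) + 2 * G2) + cmod (G1 * (2 * W))"
        using norm_triangle_ineq4[of "G1 * (2 * W) + 2 * G2" "G1 * (2 * W)"] by simp
      thus ?thesis using v0 by (metis distrib_left mult_left_mono)
    qed
    moreover have "v * cmod (G1 * (2 * W)) \<le> 2 * K"
    proof -
      have "v * cmod (G1 * (2 * W)) = 2 * x * (v * cmod G1)" by (simp add: norm_mult x_def)
      also have "\<dots> \<le> 2 * 1 * K" using x H1 v0 by (intro mult_mono) auto
      finally show ?thesis by simp
    qed
    ultimately have "2 * (v * cmod G2) \<le> 4 * K" using H0 by (simp add: norm_mult)
    hence "v * cmod G2 \<le> 2 * K" by simp
    also have "\<dots> \<le> 192 * K * Q"
      using mult_left_mono[OF Q16, of "192 * K"] K0 by simp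
    finally show ?thesis using g1 by simp
  next
    case False
    define t where "t = 1 - x"
    have t: "0 < t" "t \<le> 1/4" using False x by (auto simp: t_def)
    obtain n :: nat where n1: "real n * t \<le> 1/4" and n2: "1/4 \<le> (real n + 1) * t" and n0: "1 \<le> n"
      using floor_choice[of t "1/4"] t by auto
    have "1 - real (2*n) * t \<le> x^(2*n)" using Bernoulli_inequality[of "-t" "2*n"] t by (simp add: t_def algebra_simps)
    hence x2n: "1/2 \<le> x^(2*n)" using n1 by simp
    have xn: "x^(2*n) \<le> x^n" using x by (intro power_decreasing) auto
    define A1 where "A1 = cmod (G1 * W + of_nat (Suc n) * G2)"
    define A2 where "A2 = cmod (G1 * W + of_nat (Suc (2*n)) * G2)"
    define E where "E = (real n + 2) powr \<alpha>"
    define E2 where "E2 = (real (2*n) + 2) powr \<alpha>"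
    have E: "0 < E" by (simp add: E_def)
    have EE2: "E \<le> E2" unfolding E_def E2_def using a by (intro powr_mono2) auto
    have cancel: "v * A * Ek \<le> 2 * K"
      if hk: "v * ((real k + 2) * y * A) \<le> K * (real k + 2) powr (1 - \<alpha>)" and Ek: "Ek = (real k + 2) powr \<alpha>"
        and y: "1/2 \<le> y" and A: "0 \<le> A" for k :: nat and y A Ek
    proof -
      have pk: "(real k + 2) powr (1 - \<alpha>) * Ek = real k + 2"
        unfolding Ek by (simp add: powr_add[symmetric])
      have Ek0: "0 < Ek" using Ek by simp
      have "(real k + 2) * (v * y * A * Ek) = (v * ((real k + 2) * y * A)) * Ek" by (simp add: mult_ac)
      also have "\<dots> \<le> (K * (real k + 2) powr (1 - \<alpha>)) * Ek" using hk Ek0 by (intro mult_right_mono) auto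
      also have "\<dots> = (real k + 2) * K" using pk by (simp add: mult_ac)
      finally have "v * y * A * Ek \<le> K" by (simp add: mult_le_cancel_left_pos add_pos_nonneg)
      moreover have "(1/2) * (v * A * Ek) \<le> y * (v * A * Ek)"
        using y v0 A Ek0 by (intro mult_right_mono) auto
      ultimately show ?thesis by (simp add: mult_ac)
    qed
    have hY1: "v * A1 * E \<le> 2 * K"
      by (rule cancel[OF Hfac[of n, folded A1_def] E_def]) (use x2n xn in \<open>auto simp: A1_def\<close>)
    have hY2: "v * A2 * E2 \<le> 2 * K"
      by (rule cancel[OF Hfac[of "2*n", folded A2_def] E2_def]) (use x2n in \<open>auto simp: A2_def\<close>)
    have hY2': "v * A2 * E \<le> 2 * K"
    proof -
      have "v * A2 * E \<le> v * A2 * E2" using EE2 v0 by (intro mult_left_mono) (auto simp: A2_def)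
      thus ?thesis using hY2 by simp
    qed
    have h3: "real n * (v * cmod G2) \<le> v * A1 + v * A2"
    proof -
      have e: "of_nat n * G2 = (G1 * W + of_nat (Suc (2*n)) * G2) - (G1 * W + of_nat (Suc n) * G2)"
        by (simp add: algebra_simps)
      have "cmod (of_nat n * G2) \<le> A2 + A1"
        unfolding e A1_def A2_def by (rule norm_triangle_ineq4)
      hence "real n * cmod G2 \<le> A1 + A2" by (simp add: norm_mult)
      hence "v * (real n * cmod G2) \<le> v * (A1 + A2)" using v0 by (rule mult_left_mono)
      thus ?thesis by (simp add: algebra_simps)
    qed
    have h4: "x * (v * cmod G1) \<le> v * A1 + (real n + 1) * (v * cmod G2)"
    proof -
      have e: "G1 * W = (G1 * W + of_nat (Suc n) * G2) - of_nat (Suc n) * G2" by simp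
      have "cmod (G1 * W) \<le> A1 + cmod (of_nat (Suc n) * G2)"
        unfolding A1_def by (subst e) (rule norm_triangle_ineq4)
      moreover have "cmod (of_nat (Suc n) :: complex) = real (Suc n)" by (rule norm_of_nat)
      hence "cmod (1 + of_nat n :: complex) = real n + 1" by simp
      ultimately have "x * cmod G1 \<le> A1 + (real n + 1) * cmod G2" by (simp add: norm_mult x_def mult.commute)
      hence "v * (x * cmod G1) \<le> v * (A1 + (real n + 1) * cmod G2)" using v0 by (rule mult_left_mono)
      thus ?thesis by (simp add: algebra_simps)
    qed
    have qt: "t \<le> q"
    proof -
      have "x * x \<le> x * 1" using x by (intro mult_left_mono) auto
      thus ?thesis by (simp add: q_def t_def power2_eq_square)
    qed
    have nq: "1/4 \<le> (real n + 2) * q"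
    proof -
      have "(real n + 1) * t \<le> (real n + 2) * q" using qt t by (intro mult_mono) auto
      thus ?thesis using n2 by simp
    qed
    have EP: "E * P = ((real n + 2) * q) powr \<alpha>" using q by (simp add: E_def P_def powr_mult)
    have EP4: "1/4 \<le> E * P" unfolding EP using quarter_powr[OF _ _ nq, of \<alpha>] a by simp
    have h5: "1 \<le> 4 * E * P" using EP4 by simp
    have h6: "1 \<le> 16 * (real n + 2) * E * Q"
    proof -
      have "(1/4) * (1/4) \<le> (E * P) * ((real n + 2) * q)" using EP4 nq by (intro mult_mono) auto
      also have "\<dots> = (real n + 2) * E * Q" by (simp add: QP mult_ac)
      finally have "1/16 \<le> (real n + 2) * E * Q" by simp
      moreover have "16 * (real n + 2) * E * Q = 16 * ((real n + 2) * E * Q)" by (simp only: mult.assoc)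
      ultimately show ?thesis by linarith
    qed
    have res: "v * cmod G1 \<le> 56 * K * P" "v * cmod G2 \<le> 192 * K * Q"
      by (rule alg[of "real n" x "v * cmod G1" "v * cmod G2" "v * A1" "v * A2" E P Q K, OF _ _ _ _ _ _ E _ _ K0 hY1 hY2' h3 h4 h5 h6],
          use n0 False v0 P Q in \<open>auto simp: A1_def A2_def\<close>)+
    thus ?thesis by simp
  qed
  show "v * cmod G1 / (1 - (cmod W)\<^sup>2) powr \<alpha> \<le> 56 * K"
    using G1s P by (simp add: pos_divide_le_eq P_def q_def x_def mult_ac)
  show "v * cmod G2 / (1 - (cmod W)\<^sup>2) powr (\<alpha> + 1) \<le> 192 * K"
    using G1s Q by (simp add: pos_divide_le_eq Q_def q_def x_def mult_ac)
qed



lemma zyg_upper: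
  assumes "F \<in> zygmund_type \<beta>" "z \<in> unit_disc"
  shows "(1 - (cmod z)\<^sup>2) powr \<beta> * cmod (deriv (deriv F) z) \<le> zygmund_norm \<beta> F"
proof -
  have "(1 - (cmod z)\<^sup>2) powr \<beta> * cmod (deriv (deriv F) z) \<le> (SUP z\<in>unit_disc. (1 - (cmod z)\<^sup>2) powr \<beta> * cmod (deriv (deriv F) z))"
    using assms unfolding zygmund_type_def by (auto intro: cSUP_upper)
  thus ?thesis unfolding zygmund_norm_def using norm_ge_zero[of "F 0"] norm_ge_zero[of "deriv F 0"] by linarith
qed

lemma nec:
  assumes a: "0 < \<alpha>" "\<alpha> < 1"
    and u: "u holomorphic_on unit_disc" and phi: "self_map_disc \<phi>"
    and bdd: "wcomp_bounded_BZ \<alpha> \<beta> u \<phi>"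
  shows "u \<in> zygmund_type \<beta>"
    and "\<exists>B1. \<forall>z\<in>unit_disc. (1 - (cmod z)\<^sup>2) powr \<beta> * cmod (g1 u \<phi> z) / (1 - (cmod (\<phi> z))\<^sup>2) powr \<alpha> \<le> B1"
    and "\<exists>B2. \<forall>z\<in>unit_disc. (1 - (cmod z)\<^sup>2) powr \<beta> * cmod (g2 u \<phi> z) / (1 - (cmod (\<phi> z))\<^sup>2) powr (\<alpha> + 1) \<le> B2"
proof -
  have hp: "\<phi> holomorphic_on unit_disc" and pD: "\<phi> ` unit_disc \<subseteq> unit_disc"
    using phi by (auto simp: self_map_disc_def)
  have pDz: "\<phi> z \<in> unit_disc" if "z \<in> unit_disc" for z using pD that by blast
  obtain C0 where C0: "\<And>f. f \<in> bloch_type \<alpha> \<Longrightarrow> wcomp u \<phi> f \<in> zygmund_type \<beta> \<and> zygmund_norm \<beta> (wcomp u \<phi> f) \<le> C0 * bloch_norm \<alpha> f"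
    using bdd unfolding wcomp_bounded_BZ_def by blast
  have w1: "wcomp u \<phi> (\<lambda>z. 1) = u" by (simp add: wcomp_def)
  show uZ: "u \<in> zygmund_type \<beta>" using C0[OF const1_bloch(1)] w1 by simp
  have uN: "zygmund_norm \<beta> u \<le> C0" using C0[OF const1_bloch(1)] w1 const1_bloch(2) by simp
  have Mu: "(1 - (cmod z)\<^sup>2) powr \<beta> * cmod (deriv (deriv u) z) \<le> C0" if "z \<in> unit_disc" for z
    using zyg_upper[OF uZ that] uN by linarith
  have C00: "0 \<le> C0" using Mu[of 0] by (smt (verit) mult_nonneg_nonneg norm_ge_zero powr_ge_zero zero_less_one mem_ball dist_0_norm norm_zero)
  have vF: "(1 - (cmod z)\<^sup>2) powr \<beta> * cmod (deriv (deriv (wcomp u \<phi> (\<lambda>z. z ^ Suc k))) z) \<le> C0 * (16 * (real k + 1) powr (1 - \<alpha>))"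
    if z: "z \<in> unit_disc" for z k
  proof -
    have "(1 - (cmod z)\<^sup>2) powr \<beta> * cmod (deriv (deriv (wcomp u \<phi> (\<lambda>z. z ^ Suc k))) z) \<le> C0 * bloch_norm \<alpha> (\<lambda>z. z ^ Suc k)"
      using zyg_upper[OF _ z] C0[OF pw_bloch(1)[OF a]] by (meson order_trans)
    also have "\<dots> \<le> C0 * (16 * (real k + 1) powr (1 - \<alpha>))"
      using pw_bloch(2)[OF a] C00 by (intro mult_left_mono) auto
    finally show ?thesis .
  qed
  have hpw: "(\<lambda>z::complex. z ^ Suc k) holomorphic_on unit_disc" for k by (intro holomorphic_intros)
  note D = wcomp_derivs[OF u hp pD hpw]
  define K where "K = 17 * C0"
  have bounds: "(1 - (cmod z)\<^sup>2) powr \<beta> * cmod (g1 u \<phi> z) / (1 - (cmod (\<phi> z))\<^sup>2) powr \<alpha> \<le> 56 * K \<and>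
     (1 - (cmod z)\<^sup>2) powr \<beta> * cmod (g2 u \<phi> z) / (1 - (cmod (\<phi> z))\<^sup>2) powr (\<alpha> + 1) \<le> 192 * K"
    if z: "z \<in> unit_disc" for z
  proof -
    define v where "v = (1 - (cmod z)\<^sup>2) powr \<beta>"
    define W where "W = \<phi> z"
    have W: "cmod W < 1" using pDz[OF z] by (simp add: W_def)
    have v0: "0 \<le> v" by (simp add: v_def)
    have uW: "v * cmod (deriv (deriv u) z * W ^ m) \<le> C0" for m
    proof -
      have "v * cmod (deriv (deriv u) z * W ^ m) = (v * cmod (deriv (deriv u) z)) * cmod W ^ m"
        by (simp add: norm_mult norm_power)
      also have "\<dots> \<le> C0 * 1" using Mu[OF z] W C00 v0
        by (intro mult_mono) (auto simp: v_def power_le_one)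
      finally show ?thesis by simp
    qed
    have H1: "v * cmod (g1 u \<phi> z) \<le> K"
    proof -
      have e: "deriv (deriv (wcomp u \<phi> (\<lambda>z. z ^ Suc 0))) z = deriv (deriv u) z * W ^ 1 + g1 u \<phi> z"
        using D(3)[OF z, of 0] by (simp add: W_def deriv_pw)
      have "v * cmod (deriv (deriv u) z * W ^ 1 + g1 u \<phi> z) \<le> C0 * 16"
        using vF[OF z, of 0] unfolding e by (simp add: v_def)
      moreover have "cmod (g1 u \<phi> z) \<le> cmod (deriv (deriv u) z * W ^ 1 + g1 u \<phi> z) + cmod (deriv (deriv u) z * W ^ 1)"
        using norm_triangle_ineq4[of "deriv (deriv u) z * W ^ 1 + g1 u \<phi> z" "deriv (deriv u) z * W ^ 1"] by simp
      hence "v * cmod (g1 u \<phi> z) \<le> v * cmod (deriv (deriv u) z * W ^ 1 + g1 u \<phi> z) + v * cmod (deriv (deriv u) z * W ^ 1)"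
        using v0 by (metis distrib_left mult_left_mono)
      ultimately show ?thesis using uW[of 1] by (simp add: K_def)
    qed
    have H: "v * cmod (g1 u \<phi> z * (of_nat (Suc (Suc k)) * W ^ Suc k) + g2 u \<phi> z * (of_nat (Suc (Suc k)) * (of_nat (Suc k) * W ^ k)))
            \<le> K * (real k + 2) powr (1 - \<alpha>)" for k
    proof -
      define T where "T = g1 u \<phi> z * (of_nat (Suc (Suc k)) * W ^ Suc k) + g2 u \<phi> z * (of_nat (Suc (Suc k)) * (of_nat (Suc k) * W ^ k))"
      have e: "deriv (deriv (wcomp u \<phi> (\<lambda>z. z ^ Suc (Suc k)))) z = deriv (deriv u) z * W ^ Suc (Suc k) + T"
        using D(3)[OF z, of "Suc k", unfolded deriv2_pw, unfolded deriv_pw] by (simp add: W_def T_def)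
      have p1: "1 \<le> (real k + 2) powr (1 - \<alpha>)" using a by (intro ge_one_powr_ge_zero) auto
      have "v * cmod (deriv (deriv u) z * W ^ Suc (Suc k) + T) \<le> C0 * (16 * (real (Suc k) + 1) powr (1 - \<alpha>))"
        using vF[OF z, of "Suc k"] unfolding e by (simp add: v_def)
      also have "real (Suc k) + 1 = real k + 2" by simp
      finally have A: "v * cmod (deriv (deriv u) z * W ^ Suc (Suc k) + T) \<le> 16 * C0 * (real k + 2) powr (1 - \<alpha>)" by simp
      have "cmod T \<le> cmod (deriv (deriv u) z * W ^ Suc (Suc k) + T) + cmod (deriv (deriv u) z * W ^ Suc (Suc k))"
        using norm_triangle_ineq4[of "deriv (deriv u) z * W ^ Suc (Suc k) + T" "deriv (deriv u) z * W ^ Suc (Suc k)"] by simp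
      hence "v * cmod T \<le> v * cmod (deriv (deriv u) z * W ^ Suc (Suc k) + T) + v * cmod (deriv (deriv u) z * W ^ Suc (Suc k))"
        using v0 by (metis distrib_left mult_left_mono)
      also have "\<dots> \<le> 16 * C0 * (real k + 2) powr (1 - \<alpha>) + C0 * (real k + 2) powr (1 - \<alpha>)"
        using A uW[of "Suc (Suc k)"] mult_left_mono[OF p1 C00] by simp
      also have "\<dots> = K * (real k + 2) powr (1 - \<alpha>)" by (simp add: K_def algebra_simps)
      finally show ?thesis by (simp add: T_def)
    qed
    have K0: "0 \<le> K" using C00 by (simp add: K_def)
    from sep_core[OF a v0 K0 W H H1] show ?thesis by (simp add: v_def W_def)
  qed
  show "\<exists>B1. \<forall>z\<in>unit_disc. (1 - (cmod z)\<^sup>2) powr \<beta> * cmod (g1 u \<phi> z) / (1 - (cmod (\<phi> z))\<^sup>2) powr \<alpha> \<le> B1"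
    using bounds by blast
  show "\<exists>B2. \<forall>z\<in>unit_disc. (1 - (cmod z)\<^sup>2) powr \<beta> * cmod (g2 u \<phi> z) / (1 - (cmod (\<phi> z))\<^sup>2) powr (\<alpha> + 1) \<le> B2"
    using bounds by blast
qed


lemma sup_fin_bound:
  fixes f :: "complex \<Rightarrow> real"
  assumes "(SUP z\<in>A. ereal (f z)) < \<infinity>" "z0 \<in> A"
  shows "\<exists>B. \<forall>z\<in>A. f z \<le> B"
proof -
  have le: "ereal (f z) \<le> (SUP z\<in>A. ereal (f z))" if "z \<in> A" for z using that by (rule SUP_upper)
  show ?thesis
  proof (cases "(SUP z\<in>A. ereal (f z))")
    case (real r) thus ?thesis using le by (intro exI[of _ r]) auto
  next
    case PInf thus ?thesis using assms by simp
  next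
    case MInf thus ?thesis using le[OF assms(2)] by simp
  qed
qed

lemma sup_bound_fin:
  fixes f :: "complex \<Rightarrow> real"
  assumes "\<forall>z\<in>A. f z \<le> B"
  shows "(SUP z\<in>A. ereal (f z)) \<le> ereal B"
  using assms by (intro SUP_least) auto

theorem theorem3p1:
  fixes \<alpha> \<beta> :: real
  assumes "0 < \<alpha>" "\<alpha> < 1" "0 < \<beta>"
  shows "(\<exists>C>0. \<forall>u \<phi>. u holomorphic_on unit_disc \<and> self_map_disc \<phi> \<longrightarrow>
            S1 \<alpha> \<beta> u \<phi> \<le> ereal C * T1 \<alpha> \<beta> u \<phi> \<and> T1 \<alpha> \<beta> u \<phi> \<le> ereal C * S1 \<alpha> \<beta> u \<phi> \<and>
            S2 \<alpha> \<beta> u \<phi> \<le> ereal C * T2 \<alpha> \<beta> u \<phi> \<and> T2 \<alpha> \<beta> u \<phi> \<le> ereal C * S2 \<alpha> \<beta> u \<phi>)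
       \<and> (\<forall>u \<phi>. u holomorphic_on unit_disc \<and> self_map_disc \<phi> \<longrightarrow>
            (wcomp_bounded_BZ \<alpha> \<beta> u \<phi> \<longleftrightarrow>
               u \<in> zygmund_type \<beta> \<and>
               S1 \<alpha> \<beta> u \<phi> < \<infinity> \<and> T1 \<alpha> \<beta> u \<phi> < \<infinity> \<and>
               S2 \<alpha> \<beta> u \<phi> < \<infinity> \<and> T2 \<alpha> \<beta> u \<phi> < \<infinity>))"
proof -
  have a: "0 < \<alpha>" "\<alpha> < 1" using assms by auto
  have eq: "S1 \<alpha> \<beta> u \<phi> \<le> ereal 16 * T1 \<alpha> \<beta> u \<phi> \<and> T1 \<alpha> \<beta> u \<phi> \<le> ereal 16 * S1 \<alpha> \<beta> u \<phi> \<and>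
            S2 \<alpha> \<beta> u \<phi> \<le> ereal 16 * T2 \<alpha> \<beta> u \<phi> \<and> T2 \<alpha> \<beta> u \<phi> \<le> ereal 16 * S2 \<alpha> \<beta> u \<phi>"
    if phi: "self_map_disc \<phi>" for u \<phi>
  proof -
    have p: "\<forall>z\<in>unit_disc. cmod (\<phi> z) < 1" using phi by (auto simp: self_map_disc_def)
    have a1: "0 < \<alpha> + 1" "\<alpha> + 1 \<le> 2" using a by auto
    show ?thesis unfolding S1_def T1_def S2_def T2_def
      using equiv_gen[of \<alpha> \<phi> \<beta> "g1 u \<phi>"] equiv_gen[OF a1 p, of \<beta> "g2 u \<phi>"] a p by auto
  qed
  show ?thesis
    apply (rule conjI)
    subgoal
      apply (rule exI[of _ "16::real"])
      apply (rule conjI)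
       apply simp
      apply (intro allI impI)
      apply (rule eq)
      apply simp
      done
    subgoal
  proof (intro allI impI)
    fix u \<phi> assume h: "u holomorphic_on unit_disc \<and> self_map_disc \<phi>"
    hence u: "u holomorphic_on unit_disc" and phi: "self_map_disc \<phi>" by auto
    note E = eq[OF phi]
    have z0: "(0::complex) \<in> unit_disc" by simp
    show "wcomp_bounded_BZ \<alpha> \<beta> u \<phi> \<longleftrightarrow>
               u \<in> zygmund_type \<beta> \<and>
               S1 \<alpha> \<beta> u \<phi> < \<infinity> \<and> T1 \<alpha> \<beta> u \<phi> < \<infinity> \<and>
               S2 \<alpha> \<beta> u \<phi> < \<infinity> \<and> T2 \<alpha> \<beta> u \<phi> < \<infinity>"
    proof
      assume b: "wcomp_bounded_BZ \<alpha> \<beta> u \<phi>"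
      obtain B1 where B1: "\<forall>z\<in>unit_disc. (1 - (cmod z)\<^sup>2) powr \<beta> * cmod (g1 u \<phi> z) / (1 - (cmod (\<phi> z))\<^sup>2) powr \<alpha> \<le> B1"
        using nec(2)[OF a u phi b] by blast
      obtain B2 where B2: "\<forall>z\<in>unit_disc. (1 - (cmod z)\<^sup>2) powr \<beta> * cmod (g2 u \<phi> z) / (1 - (cmod (\<phi> z))\<^sup>2) powr (\<alpha> + 1) \<le> B2"
        using nec(3)[OF a u phi b] by blast
      have s1: "S1 \<alpha> \<beta> u \<phi> \<le> ereal B1" unfolding S1_def by (rule sup_bound_fin[OF B1])
      have s2: "S2 \<alpha> \<beta> u \<phi> \<le> ereal B2" unfolding S2_def by (rule sup_bound_fin[OF B2])
      have t1: "T1 \<alpha> \<beta> u \<phi> \<le> ereal (16 * B1)"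
      proof -
        have "T1 \<alpha> \<beta> u \<phi> \<le> ereal 16 * S1 \<alpha> \<beta> u \<phi>" using E by blast
        also have "\<dots> \<le> ereal 16 * ereal B1" by (rule ereal_mult_left_mono[OF s1]) simp
        finally show ?thesis by simp
      qed
      have t2: "T2 \<alpha> \<beta> u \<phi> \<le> ereal (16 * B2)"
      proof -
        have "T2 \<alpha> \<beta> u \<phi> \<le> ereal 16 * S2 \<alpha> \<beta> u \<phi>" using E by blast
        also have "\<dots> \<le> ereal 16 * ereal B2" by (rule ereal_mult_left_mono[OF s2]) simp
        finally show ?thesis by simp
      qed
      have f1: "S1 \<alpha> \<beta> u \<phi> < \<infinity>" by (rule order.strict_trans1[OF s1]) simp
      have f2: "S2 \<alpha> \<beta> u \<phi> < \<infinity>" by (rule order.strict_trans1[OF s2]) simp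
      have f3: "T1 \<alpha> \<beta> u \<phi> < \<infinity>" by (rule order.strict_trans1[OF t1]) simp
      have f4: "T2 \<alpha> \<beta> u \<phi> < \<infinity>" by (rule order.strict_trans1[OF t2]) simp
      show "u \<in> zygmund_type \<beta> \<and> S1 \<alpha> \<beta> u \<phi> < \<infinity> \<and> T1 \<alpha> \<beta> u \<phi> < \<infinity> \<and> S2 \<alpha> \<beta> u \<phi> < \<infinity> \<and> T2 \<alpha> \<beta> u \<phi> < \<infinity>"
        using nec(1)[OF a u phi b] f1 f2 f3 f4 by blast
    next
      assume c: "u \<in> zygmund_type \<beta> \<and> S1 \<alpha> \<beta> u \<phi> < \<infinity> \<and> T1 \<alpha> \<beta> u \<phi> < \<infinity> \<and> S2 \<alpha> \<beta> u \<phi> < \<infinity> \<and> T2 \<alpha> \<beta> u \<phi> < \<infinity>"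
      obtain B1 where B1: "\<forall>z\<in>unit_disc. (1 - (cmod z)\<^sup>2) powr \<beta> * cmod (g1 u \<phi> z) / (1 - (cmod (\<phi> z))\<^sup>2) powr \<alpha> \<le> B1"
        using sup_fin_bound[OF conjunct1[OF conjunct2[OF c], unfolded S1_def] z0] by blast
      obtain B2 where B2: "\<forall>z\<in>unit_disc. (1 - (cmod z)\<^sup>2) powr \<beta> * cmod (g2 u \<phi> z) / (1 - (cmod (\<phi> z))\<^sup>2) powr (\<alpha> + 1) \<le> B2"
        using sup_fin_bound[OF conjunct1[OF conjunct2[OF conjunct2[OF conjunct2[OF c]]], unfolded S2_def] z0] by blast
      show "wcomp_bounded_BZ \<alpha> \<beta> u \<phi>"
      proof (rule suff[OF a u phi])
        show "u \<in> zygmund_type \<beta>" using c by blast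
      next
        fix z :: complex assume "z \<in> unit_disc"
        thus "(1 - (cmod z)\<^sup>2) powr \<beta> * cmod (g1 u \<phi> z) / (1 - (cmod (\<phi> z))\<^sup>2) powr \<alpha> \<le> B1" using B1 by blast
      next
        fix z :: complex assume "z \<in> unit_disc"
        thus "(1 - (cmod z)\<^sup>2) powr \<beta> * cmod (g2 u \<phi> z) / (1 - (cmod (\<phi> z))\<^sup>2) powr (\<alpha> + 1) \<le> B2" using B2 by blast
      qed
    qed
  qed
  done
qed

end
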